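(* Let $n\in\mathbb{N}$, $n\ge 1$, and let $f:\mathbb{R}\to\mathbb{R}$ be an $n$-monomial function. Then the graph $G(f)=\{(x,f(x)):x\in\mathbb{R}\}\subseteq\mathbb{R}^2$ is either connected or totally disconnected. Furthermore, for every $n\in\mathbb{N}$, $n\ge1$, there exist a discontinuous $n$-monomial function $f:\mathbb{R}\to\mathbb{R}$ whose graph is connected and a discontinuous $n$-monomial function $g:\mathbb{R}\to\mathbb{R}$ whose graph is totally disconnected.
   Context: For $h\in\mathbb{R}$, $\Delta_h f(x)=f(x+h)-f(x)$ and $\Delta_h^{n}=\Delta_h\circ\Delta_h^{n-1}$. A function $f:\mathbb{R}\to\mathbb{R}$ is an $n$-monomial function if $\frac{1}{n!}\Delta_h^n f(x)=f(h)$ for all $x,h\in\mathbb{R}$ (equivalently, $f(x)=F(x,\dots,x)$ for some symmetric $n$-additive $F:\mathbb{R}^n\to\mathbb{R}$). A subset of $\mathbb{R}^2$ is totally disconnected if all its connected components are singletons. $\mathbb{R}^2$ carries the Euclidean topology and $G(f)$ the subspace topology. *)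

theory Defs
  imports "HOL-Analysis.Analysis"
begin

definition diff_op :: "real \<Rightarrow> (real \<Rightarrow> real) \<Rightarrow> real \<Rightarrow> real" where
  "diff_op h f x = f (x + h) - f x"

definition diff_pow :: "nat \<Rightarrow> real \<Rightarrow> (real \<Rightarrow> real) \<Rightarrow> real \<Rightarrow> real" where
  "diff_pow n h = (diff_op h) ^^ n"

definition monomial_fun :: "nat \<Rightarrow> (real \<Rightarrow> real) \<Rightarrow> bool" where
  "monomial_fun n f \<longleftrightarrow> (\<forall>x h. diff_pow n h f x / fact n = f h)"

definition graph_of :: "(real \<Rightarrow> real) \<Rightarrow> (real \<times> real) set" where
  "graph_of f = {(x, f x) | x. True}"

definition totally_disconnected :: "'a::topological_space set \<Rightarrow> bool" where
  "totally_disconnected S \<longleftrightarrow> (\<forall>x\<in>S. connected_component_set S x = {x})"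

end

theory Submission
  imports Defs "HOL-Computational_Algebra.Polynomial"
begin


lemma diff_pow_0[simp]: "diff_pow 0 h f = f"
  by (simp add: diff_pow_def)

lemma diff_pow_Suc: "diff_pow (Suc n) h f = diff_op h (diff_pow n h f)"
  by (simp add: diff_pow_def)

lemma diff_pow_Suc2: "diff_pow (Suc n) h f = diff_pow n h (diff_op h f)"
  by (simp only: diff_pow_def funpow_Suc_right comp_def)

lemma diff_pow_lin:
  assumes "finite J"
  shows "diff_pow m h (\<lambda>t. \<Sum>j\<in>J. c j * g j t) = (\<lambda>t. \<Sum>j\<in>J. c j * diff_pow m h (g j) t)"
proof (induction m)
  case 0 then show ?case by simp
next
  case (Suc m)
  show ?case
    by (simp add: diff_pow_Suc Suc diff_op_def sum_subtractf[symmetric] right_diff_distrib)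
qed

lemma diff_pow_mono_aux:
  "j \<le> m \<Longrightarrow> diff_pow m 1 (\<lambda>t. t ^ j) t0 = (if j = m then fact m else 0)"
proof (induction m arbitrary: j t0)
  case 0 then show ?case by simp
next
  case (Suc m)
  have d: "diff_op 1 (\<lambda>t::real. t ^ j) = (\<lambda>t. \<Sum>i\<in>{..<j}. of_nat (j choose i) * t ^ i)"
  proof
    fix t :: real
    have "(t + 1) ^ j = (\<Sum>i\<le>j. of_nat (j choose i) * t ^ i)"
      by (simp add: binomial_ring)
    also have "\<dots> = (\<Sum>i<j. of_nat (j choose i) * t ^ i) + t ^ j"
      by (simp add: lessThan_Suc_atMost[symmetric])
    finally show "diff_op 1 (\<lambda>t. t ^ j) t = (\<Sum>i\<in>{..<j}. of_nat (j choose i) * t ^ i)"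
      by (simp add: diff_op_def)
  qed
  have "diff_pow (Suc m) 1 (\<lambda>t. t ^ j) t0 = (\<Sum>i\<in>{..<j}. of_nat (j choose i) * diff_pow m 1 (\<lambda>t. t ^ i) t0)"
    by (simp add: diff_pow_Suc2 d diff_pow_lin)
  also have "\<dots> = (\<Sum>i\<in>{..<j}. of_nat (j choose i) * (if i = m then fact m else 0))"
    using Suc.prems by (intro sum.cong refl) (simp add: Suc.IH)
  also have "\<dots> = (if j = Suc m then fact (Suc m) else 0)"
  proof (cases "j = Suc m")
    case True
    then have "(\<Sum>i\<in>{..<j}. of_nat (j choose i) * (if i = m then fact m else (0::real)))
        = of_nat (Suc m choose m) * fact m"
      by (simp add: sum.delta)
    then show ?thesis using True by (simp add: binomial_Suc_n algebra_simps)
  next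
    case False
    then have "j \<le> m" using Suc.prems by simp
    then show ?thesis using False by (intro trans[OF sum.neutral]) auto
  qed
  finally show ?case .
qed

lemma diff_pow_poly:
  assumes "degree P \<le> m"
  shows "diff_pow m 1 (poly P) t0 = fact m * coeff P m"
proof -
  have "poly P = (\<lambda>t. \<Sum>j\<in>{..m}. coeff P j * t ^ j)"
  proof
    fix t
    show "poly P t = (\<Sum>j\<in>{..m}. coeff P j * t ^ j)"
      unfolding poly_altdef
      by (rule sum.mono_neutral_left) (use assms in \<open>auto simp: coeff_eq_0\<close>)
  qed
  then have "diff_pow m 1 (poly P) t0 = (\<Sum>j\<in>{..m}. coeff P j * diff_pow m 1 (\<lambda>t. t ^ j) t0)"
    by (simp add: diff_pow_lin)
  also have "\<dots> = (\<Sum>j\<in>{..m}. coeff P j * (if j = m then fact m else 0))"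
    by (intro sum.cong refl) (simp add: diff_pow_mono_aux)
  also have "\<dots> = fact m * coeff P m"
    by (simp add: if_distrib sum.delta cong: if_cong)
  finally show ?thesis .
qed

lemma diff_pow_shift:
  "diff_pow n h f (x + k * h) = diff_pow n 1 (\<lambda>t. f (x + t * h)) k"
proof (induction n arbitrary: k)
  case 0 then show ?case by simp
next
  case (Suc n)
  have e: "x + k * h + h = x + (k + 1) * h" by (simp add: algebra_simps)
  show ?case
    by (simp add: diff_pow_Suc diff_op_def e Suc.IH[symmetric])
qed

lemma diff_pow_local:
  "(\<And>j::nat. \<phi> (k + real j) = \<psi> (k + real j)) \<Longrightarrow> diff_pow n 1 \<phi> k = diff_pow n 1 \<psi> k"
proof (induction n arbitrary: k)
  case 0
  then show ?case using "0.prems"[of 0] by simp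
next
  case (Suc n)
  have a: "diff_pow n 1 \<phi> k = diff_pow n 1 \<psi> k" by (rule Suc.IH) (rule Suc.prems)
  have b: "diff_pow n 1 \<phi> (k + 1) = diff_pow n 1 \<psi> (k + 1)"
  proof (rule Suc.IH)
    fix j :: nat
    show "\<phi> (k + 1 + real j) = \<psi> (k + 1 + real j)"
      using Suc.prems[of "Suc j"] by (simp add: add.assoc)
  qed
  show ?case by (simp add: diff_pow_Suc diff_op_def a b)
qed

lemma coeff_prod_lin:
  "degree (\<Prod>i<n. [:a i, b i:]) \<le> n \<and> coeff (\<Prod>i<n. [:a i, b i:]) n = (\<Prod>i<n. b i)"
proof (induction n)
  case 0 then show ?case by simp
next
  case (Suc n)
  let ?Q = "\<Prod>i<n. [:a i, b i:]"
  have eq: "(\<Prod>i<Suc n. [:a i, b i:]) = [:a n, b n:] * ?Q"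
    by (simp add: mult.commute)
  have d1: "degree [:a n, b n:] \<le> 1" by (simp add: degree_pCons_eq_if)
  have "degree ([:a n, b n:] * ?Q) \<le> degree [:a n, b n:] + degree ?Q" by (rule degree_mult_le)
  then have deg: "degree ([:a n, b n:] * ?Q) \<le> Suc n"
    using d1 Suc.IH by linarith
  have "coeff ?Q (Suc n) = 0" using Suc.IH by (simp add: coeff_eq_0)
  then have "coeff ([:a n, b n:] * ?Q) (Suc n) = b n * coeff ?Q n"
    by (simp add: mult_pCons_left)
  then show ?case using eq deg Suc.IH by (simp add: mult.commute)
qed

lemma additive_nat:
  assumes "\<And>x y. u (x + y) = u x + u y"
  shows "u (x + real j * h) = u x + real j * u h"
proof (induction j)
  case 0
  have "u x = u (x + 0)" by simp
  then show ?case using assms[of x 0] by simp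
next
  case (Suc j)
  have "u (x + real (Suc j) * h) = u ((x + real j * h) + h)" by (simp add: algebra_simps)
  also have "\<dots> = u x + real (Suc j) * u h" using assms Suc by (simp add: algebra_simps)
  finally show ?case .
qed

lemma prod_additive_monomial:
  assumes add: "\<And>i x y. i < n \<Longrightarrow> u i (x + y) = u i x + u i y"
  shows "monomial_fun n (\<lambda>x. \<Prod>i<n. u i x)"
  unfolding monomial_fun_def
proof (intro allI)
  fix x h
  let ?f = "\<lambda>x. \<Prod>i<n. u i x"
  let ?P = "\<Prod>i<n. [:u i x, u i h:]"
  have "diff_pow n h ?f x = diff_pow n h ?f (x + 0 * h)" by simp
  also have "\<dots> = diff_pow n 1 (\<lambda>t. ?f (x + t * h)) 0" by (rule diff_pow_shift)
  also have "\<dots> = diff_pow n 1 (poly ?P) 0"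
  proof (rule diff_pow_local)
    fix j :: nat
    have u: "u i (x + h * real j) = u i x + real j * u i h" if "i < n" for i
      using additive_nat[of "u i"] add[OF that] by (metis mult.commute)
    show "?f (x + (0 + real j) * h) = poly ?P (0 + real j)"
      by (simp add: poly_prod) (intro prod.cong refl, metis u lessThan_iff mult.commute)
  qed
  also have "\<dots> = fact n * (\<Prod>i<n. u i h)"
    using coeff_prod_lin[where n=n and a="\<lambda>i. u i x" and b="\<lambda>i. u i h"] by (simp add: diff_pow_poly)
  finally show "diff_pow n h ?f x / fact n = ?f h" by simp
qed



definition Ssum :: "nat \<Rightarrow> real \<Rightarrow> (real \<Rightarrow> real) \<Rightarrow> real \<Rightarrow> real" where
  "Ssum m h g x = (\<Sum>i<m. g (x + real i * h))"

lemma diff_op_mult: "diff_op (real m * h) g = Ssum m h (diff_op h g)"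
proof
  fix x
  have "Ssum m h (diff_op h g) x = (\<Sum>i<m. g (x + real (Suc i) * h) - g (x + real i * h))"
    unfolding Ssum_def diff_op_def by (intro sum.cong refl) (simp add: algebra_simps)
  also have "\<dots> = g (x + real m * h) - g (x + real 0 * h)"
    by (rule sum_lessThan_telescope[where f = "\<lambda>i. g (x + real i * h)"])
  finally show "diff_op (real m * h) g x = Ssum m h (diff_op h g) x"
    by (simp add: diff_op_def algebra_simps)
qed

lemma diff_op_Ssum: "diff_op h (Ssum m h g) = Ssum m h (diff_op h g)"
  unfolding Ssum_def diff_op_def
  by (rule ext) (simp add: sum_subtractf algebra_simps)

lemma diff_op_Ssum_pow: "diff_op h ((Ssum m h ^^ k) g) = (Ssum m h ^^ k) (diff_op h g)"
  by (induction k) (simp_all add: diff_op_Ssum)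

lemma diff_pow_mult: "diff_pow k (real m * h) g = (Ssum m h ^^ k) (diff_pow k h g)"
proof (induction k)
  case 0 then show ?case by simp
next
  case (Suc k)
  show ?case
    by (simp add: diff_pow_Suc Suc diff_op_mult diff_op_Ssum_pow)
qed

lemma Ssum_pow_const: "(Ssum m h ^^ k) (\<lambda>_. c) = (\<lambda>_. real m ^ k * c)"
  by (induction k) (simp_all add: Ssum_def mult.assoc)

lemma monomial_diff_pow:
  "monomial_fun n f \<Longrightarrow> diff_pow n h f = (\<lambda>_. fact n * f h)"
  unfolding monomial_fun_def by (rule ext) (simp add: field_simps)

lemma monomial_nat:
  assumes "monomial_fun n f"
  shows "f (real m * h) = real m ^ n * f h"
proof -
  have "fact n * f (real m * h) = diff_pow n (real m * h) f 0"
    using monomial_diff_pow[OF assms] by metis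
  also have "\<dots> = real m ^ n * (fact n * f h)"
    by (simp add: diff_pow_mult monomial_diff_pow[OF assms] Ssum_pow_const)
  finally show ?thesis by simp
qed

lemma diff_pow_neg:
  "diff_pow k (- h) g x = (-1) ^ k * diff_pow k h g (x - real k * h)"
proof (induction k arbitrary: x)
  case 0 then show ?case by simp
next
  case (Suc k)
  have e1: "x + - h - real k * h = x - real (Suc k) * h" by (simp add: algebra_simps)
  have e2: "x - real (Suc k) * h + h = x - real k * h" by (simp add: algebra_simps)
  have "diff_pow (Suc k) (- h) g x = diff_pow k (- h) g (x + - h) - diff_pow k (- h) g x"
    by (simp add: diff_pow_Suc diff_op_def)
  also have "\<dots> = (-1) ^ k * (diff_pow k h g (x - real (Suc k) * h) - diff_pow k h g (x - real k * h))"
    by (simp only: Suc.IH e1 right_diff_distrib)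
  also have "\<dots> = (-1) ^ Suc k * diff_pow k h g (x - real (Suc k) * h + h) - (-1) ^ Suc k * diff_pow k h g (x - real (Suc k) * h)"
    by (simp only: e2) (simp add: algebra_simps)
  also have "\<dots> = (-1) ^ Suc k * diff_pow (Suc k) h g (x - real (Suc k) * h)"
    by (simp add: diff_pow_Suc diff_op_def right_diff_distrib)
  finally show ?case .
qed

lemma monomial_neg:
  assumes "monomial_fun n f"
  shows "f (- h) = (-1) ^ n * f h"
proof -
  have "fact n * f (- h) = diff_pow n (- h) f 0"
    using monomial_diff_pow[OF assms] by metis
  also have "\<dots> = fact n * ((-1) ^ n * f h)"
    by (simp only: diff_pow_neg) (simp add: monomial_diff_pow[OF assms])
  finally have "fact n * f (- h) = fact n * ((-1) ^ n * f h)" .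
  then show ?thesis by simp
qed

lemma monomial_int:
  assumes "monomial_fun n f"
  shows "f (real_of_int a * h) = real_of_int a ^ n * f h"
proof (cases "a \<ge> 0")
  case True
  define m where "m = nat a"
  have "real_of_int a = real m" using True by (simp add: m_def)
  then show ?thesis using monomial_nat[OF assms, of m] by simp
next
  case False
  define m where "m = nat (- a)"
  have ra: "real_of_int a = - real m" using False by (simp add: m_def)
  have "f (real_of_int a * h) = f (- (real m * h))" unfolding ra by simp
  also have "\<dots> = (-1) ^ n * (real m ^ n * f h)"
    unfolding monomial_neg[OF assms] monomial_nat[OF assms] ..
  also have "\<dots> = real_of_int a ^ n * f h"
  proof -
    have "(- real m) ^ n = (-1) ^ n * real m ^ n" by (metis mult_minus1 power_mult_distrib)
    then show ?thesis unfolding ra by simp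
  qed
  finally show ?thesis .
qed

lemma monomial_rat:
  assumes "monomial_fun n f" and "r \<in> \<rat>"
  shows "f (r * h) = r ^ n * f h"
proof -
  obtain a b where b: "b > 0" and r: "r = of_int a / of_int b"
    using assms(2) by (metis Rats_cases')
  have "f h = f (real_of_int b * (h / of_int b))" using b by simp
  also have "\<dots> = real_of_int b ^ n * f (h / of_int b)" by (rule monomial_int[OF assms(1)])
  finally have fb: "f (h / of_int b) = f h / real_of_int b ^ n" using b by simp
  have "f (r * h) = f (real_of_int a * (h / of_int b))" by (simp add: r)
  also have "\<dots> = real_of_int a ^ n * (f h / real_of_int b ^ n)"
    by (simp only: monomial_int[OF assms(1)] fb)
  also have "\<dots> = r ^ n * f h" by (simp add: r power_divide)
  finally show ?thesis .
qed

lemma monomial_zero: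
  assumes "monomial_fun n f" "n \<ge> 1"
  shows "f 0 = 0"
  using monomial_nat[OF assms(1), of 0 0] assms(2) by (cases n) auto



lemma in_graph[simp]: "(a, b) \<in> graph_of f \<longleftrightarrow> b = f a"
  by (auto simp: graph_of_def)

lemma in_graph': "z \<in> graph_of f \<longleftrightarrow> snd z = f (fst z)"
  by (cases z) simp

definition sig :: "nat \<Rightarrow> real \<Rightarrow> real \<times> real \<Rightarrow> real \<times> real" where
  "sig n r z = (r * fst z, r ^ n * snd z)"

lemma sig_cont: "continuous_on A (sig n r)"
  unfolding sig_def by (intro continuous_intros)

lemma sig_graph:
  assumes "monomial_fun n f" "r \<in> \<rat>" "z \<in> graph_of f"
  shows "sig n r z \<in> graph_of f"
  using assms monomial_rat[OF assms(1,2)] by (cases z) (simp add: sig_def)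

lemma sig_pt: "monomial_fun n f \<Longrightarrow> r \<in> \<rat> \<Longrightarrow> sig n r (x, f x) = (r * x, f (r * x))"
  by (simp add: sig_def monomial_rat)

lemma comp_sig:
  assumes "monomial_fun n f" "r \<in> \<rat>" "z \<in> sig n r ` connected_component_set (graph_of f) p"
    "z \<in> connected_component_set (graph_of f) p"
  shows "sig n r ` connected_component_set (graph_of f) p \<subseteq> connected_component_set (graph_of f) p"
proof -
  let ?G = "graph_of f" let ?K = "connected_component_set ?G p"
  have c: "connected (sig n r ` ?K)"
    by (intro connected_continuous_image sig_cont connected_connected_component)
  have s: "sig n r ` ?K \<subseteq> ?G"
    using sig_graph[OF assms(1,2)] connected_component_subset by blast
  have "sig n r ` ?K \<subseteq> connected_component_set ?G z"
    by (rule connected_component_maximal[OF assms(3) c s])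
  also have "\<dots> = ?K" by (rule connected_component_eq[OF assms(4)])
  finally show ?thesis .
qed

lemma in_comp_fst:
  assumes "x \<in> fst ` connected_component_set (graph_of f) p"
  shows "(x, f x) \<in> connected_component_set (graph_of f) p"
proof -
  obtain z where z: "z \<in> connected_component_set (graph_of f) p" "x = fst z" using assms by blast
  then have "z \<in> graph_of f" using connected_component_subset by blast
  then have "z = (x, f x)" using z by (cases z) simp
  then show ?thesis using z by simp
qed

lemma key_connected:
  assumes mon: "monomial_fun n f" and n: "n \<ge> 1"
    and S: "connected S" "S \<subseteq> graph_of f" and ab: "0 < a" "a < b" "{a..b} \<subseteq> fst ` S"
  shows "connected (graph_of f)"
proof -
  let ?G = "graph_of f"
  have f0: "f 0 = 0" by (rule monomial_zero[OF mon n])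
  have "a \<in> fst ` S" using ab by auto
  then obtain s0 where s0: "s0 \<in> S" by blast
  define K where "K = connected_component_set ?G s0"
  have SK: "S \<subseteq> K" unfolding K_def by (rule connected_component_maximal[OF s0 S])
  define P where "P = fst ` K"
  have abP: "{a..b} \<subseteq> P" using ab SK unfolding P_def by blast
  have intP: "is_interval P" unfolding P_def is_interval_connected_1 K_def
    by (intro connected_continuous_image continuous_intros connected_connected_component)
  have inK: "x \<in> P \<Longrightarrow> (x, f x) \<in> K" for x unfolding P_def K_def by (rule in_comp_fst)
  have KG: "K \<subseteq> ?G" unfolding K_def by (rule connected_component_subset)
  have "1 < b / a" using ab by simp
  then obtain q where q: "q \<in> \<rat>" "1 < q" "q < b / a" using Rats_dense_in_real by blast
  have q0: "q > 0" using q by simp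
  have qa: "q * a < b" using q ab by (simp add: field_simps)
  have iq: "inverse q \<in> \<rat>" using q by simp
  have sub1: "sig n q ` K \<subseteq> K"
    unfolding K_def
  proof (rule comp_sig[OF mon q(1)])
    have "a \<in> P" using abP ab by auto
    then have "(a, f a) \<in> K" by (rule inK)
    then show "(q * a, f (q * a)) \<in> sig n q ` connected_component_set ?G s0"
      using sig_pt[OF mon q(1), of a] unfolding K_def by (metis image_eqI)
    have "q * a \<in> P" using abP qa q ab by auto
    then show "(q * a, f (q * a)) \<in> connected_component_set ?G s0" using inK unfolding K_def by blast
  qed
  have sub2: "sig n (inverse q) ` K \<subseteq> K"
    unfolding K_def
  proof (rule comp_sig[OF mon iq])
    have "b \<in> P" using abP ab by auto
    then have "(b, f b) \<in> K" by (rule inK)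
    then show "(inverse q * b, f (inverse q * b)) \<in> sig n (inverse q) ` connected_component_set ?G s0"
      using sig_pt[OF mon iq, of b] unfolding K_def by (metis image_eqI)
    have "a < inverse q * b" using qa q0 by (simp add: field_simps)
    moreover have "inverse q * b \<le> b" using q ab by (simp add: field_simps)
    ultimately have "inverse q * b \<in> P" using abP by auto
    then show "(inverse q * b, f (inverse q * b)) \<in> connected_component_set ?G s0"
      using inK unfolding K_def by blast
  qed
  have Pq: "q * x \<in> P" if "x \<in> P" for x
  proof -
    have "sig n q (x, f x) \<in> K" using sub1 inK[OF that] by blast
    then show ?thesis unfolding P_def by (force simp: sig_def)
  qed
  have Piq: "inverse q * x \<in> P" if "x \<in> P" for x
  proof -
    have "sig n (inverse q) (x, f x) \<in> K" using sub2 inK[OF that] by blast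
    then show ?thesis unfolding P_def by (force simp: sig_def)
  qed
  have aP: "a \<in> P" using abP ab by auto
  have up: "a * q ^ k \<in> P" for k
  proof (induction k)
    case 0 then show ?case using aP by simp
  next
    case (Suc k) then show ?case using Pq[OF Suc] by (simp add: ac_simps)
  qed
  have down: "a / q ^ k \<in> P" for k
  proof (induction k)
    case 0 then show ?case using aP by simp
  next
    case (Suc k) then show ?case using Piq[OF Suc] by (simp add: field_simps)
  qed
  have posP: "t \<in> P" if t: "t > 0" for t
  proof -
    obtain k where k: "max (t / a) (a / t) < q ^ k" using real_arch_pow[OF q(2)] by blast
    have qk: "q ^ k > 0" using q0 by simp
    have "t \<le> a * q ^ k" using k ab t by (simp add: field_simps)
    moreover have "a / q ^ k \<le> t" using k ab t qk by (simp add: field_simps)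
    ultimately show ?thesis using intP up[of k] down[of k] unfolding is_interval_1 by blast
  qed
  have zG: "(0, 0) \<in> ?G" using f0 by simp
  have zcl: "(0, 0) \<in> closure K"
    unfolding closure_sequential
  proof (intro exI conjI allI)
    let ?s = "\<lambda>k::nat. (1 / (real k + 1), (1 / (real k + 1)) ^ n * f 1)"
    show "?s k \<in> K" for k
    proof -
      have r: "1 / (real k + 1) \<in> \<rat>" by simp
      have "(1 / (real k + 1), f (1 / (real k + 1))) \<in> K" by (intro inK posP) simp
      then show ?thesis using monomial_rat[OF mon r, of 1] by simp
    qed
    have l: "(\<lambda>k::nat. 1 / (real k + 1)) \<longlonglongrightarrow> 0"
      using LIMSEQ_inverse_real_of_nat by (simp add: inverse_eq_divide add.commute)
    have "(\<lambda>k::nat. (1 / (real k + 1)) ^ n * f 1) \<longlonglongrightarrow> 0 ^ n * f 1"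
      by (intro tendsto_intros l)
    then have "(\<lambda>k::nat. (1 / (real k + 1)) ^ n * f 1) \<longlonglongrightarrow> 0" using n by (simp add: zero_power)
    then show "?s \<longlonglongrightarrow> (0, 0)" using l by (intro tendsto_Pair)
  qed
  define K0 where "K0 = connected_component_set ?G (0, 0)"
  have "connected (insert (0, 0) K)"
    by (rule connected_intermediate_closure[of K])
       (use zcl closure_subset[of K] in \<open>auto simp: K_def\<close>)
  then have "insert (0, 0) K \<subseteq> K0"
    unfolding K0_def by (rule connected_component_maximal[rotated]) (use KG zG in auto)
  then have pos0: "(t, f t) \<in> K0" if "t > 0" for t using inK[OF posP[OF that]] by blast
  have m1: "(-1::real) \<in> \<rat>" by simp
  have sub3: "sig n (-1) ` K0 \<subseteq> K0"
    unfolding K0_def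
    by (rule comp_sig[OF mon m1, of "(0,0)"]) (use zG in \<open>auto simp: sig_def image_iff\<close>)
  have "(t, f t) \<in> K0" for t
  proof (cases "t > 0")
    case True then show ?thesis using pos0 by blast
  next
    case False
    show ?thesis
    proof (cases "t = 0")
      case True then show ?thesis using zG f0 by (simp add: K0_def)
    next
      case False
      then have "- t > 0" using \<open>\<not> t > 0\<close> by simp
      then have "sig n (-1) (- t, f (- t)) \<in> K0" using pos0 sub3 by blast
      then show ?thesis using sig_pt[OF mon m1, of "- t"] by simp
    qed
  qed
  then have "?G \<subseteq> K0" by (auto simp: graph_of_def)
  then have "K0 = ?G" unfolding K0_def using connected_component_subset by blast
  then show ?thesis unfolding K0_def by (metis connected_connected_component)
qed

lemma dichotomy:
  assumes mon: "monomial_fun n f" and n: "n \<ge> 1"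
  shows "connected (graph_of f) \<or> totally_disconnected (graph_of f)"
proof (rule ccontr)
  let ?G = "graph_of f"
  assume "\<not> ?thesis"
  then have nc: "\<not> connected ?G" and "\<not> totally_disconnected ?G" by auto
  then obtain p where p: "p \<in> ?G" "connected_component_set ?G p \<noteq> {p}"
    unfolding totally_disconnected_def by blast
  define K where "K = connected_component_set ?G p"
  have "p \<in> K" using p unfolding K_def by simp
  then obtain z where z: "z \<in> K" "z \<noteq> p" using p unfolding K_def by blast
  have KG: "K \<subseteq> ?G" unfolding K_def by (rule connected_component_subset)
  have "fst z \<noteq> fst p"
  proof
    assume "fst z = fst p"
    moreover have "z \<in> ?G" "p \<in> ?G" using z KG p by auto
    ultimately have "z = p" by (simp add: in_graph' prod_eq_iff)
    then show False using z by simp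
  qed
  then obtain x1 x2 where x12: "x1 < x2" "x1 \<in> fst ` K" "x2 \<in> fst ` K"
    using z \<open>p \<in> K\<close> by (metis image_eqI linorder_neqE)
  have intP: "is_interval (fst ` K)" unfolding is_interval_connected_1 K_def
    by (intro connected_continuous_image continuous_intros connected_connected_component)
  have sub12: "{x1..x2} \<subseteq> fst ` K" using intP x12 unfolding is_interval_1 by auto
  have cK: "connected K" unfolding K_def by simp
  show False
  proof (cases "x2 > 0")
    case True
    have "connected ?G"
      by (rule key_connected[OF mon n cK KG, of "max x1 (x2 / 2)" x2])
         (use True x12 sub12 in auto)
    then show False using nc by simp
  next
    case False
    let ?S = "sig n (-1) ` K"
    have m1: "(-1::real) \<in> \<rat>" by simp
    have cS: "connected ?S" by (intro connected_continuous_image sig_cont cK)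
    have SG: "?S \<subseteq> ?G" using sig_graph[OF mon m1] KG by blast
    have "{max (- x2) (- x1 / 2) .. - x1} \<subseteq> fst ` ?S"
    proof
      fix t assume t: "t \<in> {max (- x2) (- x1 / 2) .. - x1}"
      then have "- t \<in> {x1..x2}" by auto
      then have "- t \<in> fst ` K" using sub12 by blast
      then obtain w where "w \<in> K" "fst w = - t" by auto
      then show "t \<in> fst ` ?S" by (force simp: sig_def)
    qed
    then have "connected ?G"
      by (intro key_connected[OF mon n cS SG, of "max (- x2) (- x1 / 2)" "- x1"]) (use False x12 in auto)
    then show False using nc by simp
  qed
qed



definition scaleQ :: "rat \<Rightarrow> real \<Rightarrow> real" where
  "scaleQ q x = of_rat q * x"

interpretation Qv: vector_space scaleQ
  by unfold_locales (auto simp: scaleQ_def algebra_simps of_rat_add of_rat_mult)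

interpretation QQ: vector_space_pair scaleQ scaleQ
  by unfold_locales

lemma indep_one: "Qv.independent {1::real}"
  by (rule Qv.independent_insertI) (use Qv.independent_empty in \<open>auto simp: Qv.span_empty\<close>)

definition aQ :: "real \<Rightarrow> real" where
  "aQ x = of_rat (Qv.representation (Qv.extend_basis {1}) x 1)"

lemma aQ_add: "aQ (x + y) = aQ x + aQ y"
  unfolding aQ_def
  using Qv.representation_add[OF Qv.independent_extend_basis[OF indep_one], of y x]
  by (simp add: of_rat_add)

lemma aQ_one: "aQ 1 = 1"
proof -
  have "1 \<in> Qv.extend_basis {1::real}" using Qv.extend_basis_superset[OF indep_one] by auto
  then show ?thesis
    unfolding aQ_def
    using Qv.representation_basis[OF Qv.independent_extend_basis[OF indep_one]] by simp
qed

lemma aQ_zero: "aQ 0 = 0"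
  using aQ_add[of 0 0] by simp

lemma example_td:
  assumes n: "n \<ge> 1"
  shows "\<exists>g::real \<Rightarrow> real. monomial_fun n g \<and> \<not> continuous_on UNIV g
                \<and> totally_disconnected (graph_of g)"
proof -
  define g where "g x = aQ x ^ n" for x
  have mon: "monomial_fun n g"
  proof -
    have "monomial_fun n (\<lambda>x. \<Prod>i<n. aQ x)"
      by (rule prod_additive_monomial) (rule aQ_add)
    then show ?thesis unfolding g_def by simp
  qed
  have rat: "g x \<in> \<rat>" for x unfolding g_def aQ_def by simp
  have nc: "\<not> connected (graph_of g)"
  proof
    assume c: "connected (graph_of g)"
    have "connected (snd ` graph_of g)" by (intro connected_continuous_image continuous_intros c)
    then have iv: "is_interval (snd ` graph_of g)" by (simp add: is_interval_connected_1)
    have "g 0 = 0" using n by (simp add: g_def aQ_zero zero_power)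
    then have z: "0 \<in> snd ` graph_of g" by (force simp: graph_of_def)
    have "g 1 = 1" by (simp add: g_def aQ_one)
    then have o: "1 \<in> snd ` graph_of g" by (force simp: graph_of_def)
    have "{0..1} \<subseteq> snd ` graph_of g"
    proof
      fix t :: real assume "t \<in> {0..1}"
      then show "t \<in> snd ` graph_of g" using iv[unfolded is_interval_1] z o by (meson atLeastAtMost_iff)
    qed
    moreover have "snd ` graph_of g \<subseteq> \<rat>" using rat by (auto simp: graph_of_def)
    ultimately have "{0..1::real} \<subseteq> \<rat>" by blast
    then have "countable {0..1::real}" using countable_rat countable_subset by blast
    then show False using uncountable_closed_interval[of 0 1] by simp
  qed
  have "\<not> continuous_on UNIV g"
  proof
    assume "continuous_on UNIV g"
    then have "connected ((\<lambda>x. (x, g x)) ` UNIV)"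
      by (intro connected_continuous_image continuous_intros) auto
    moreover have "(\<lambda>x. (x, g x)) ` UNIV = graph_of g" by (auto simp: graph_of_def)
    ultimately show False using nc by simp
  qed
  moreover have "totally_disconnected (graph_of g)" using dichotomy[OF mon n] nc by simp
  ultimately show ?thesis using mon by blast
qed



lemma sep_core:
  fixes g :: "real \<Rightarrow> real"
  assumes H: "\<forall>K a b. closed K \<and> a < b \<and> {a<..<b} \<subseteq> fst ` K \<longrightarrow> graph_of g \<inter> K \<noteq> {}"
    and U: "open U" and V: "open V" and UV: "U \<inter> V = {}" and GUV: "graph_of g \<subseteq> U \<union> V"
    and xV: "(x, g x) \<in> V"
  shows "x \<notin> closure {x. (x, g x) \<in> U}"
proof
  assume "x \<in> closure {x. (x, g x) \<in> U}"
  obtain e where e: "e > 0" "ball (x, g x) e \<subseteq> V" using V xV open_contains_ball by blast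
  then obtain x' where x': "(x', g x') \<in> U" "dist x' x < e / 2"
    using \<open>x \<in> closure _\<close> unfolding closure_approachable by (metis half_gt_zero mem_Collect_eq)
  obtain e' where e': "e' > 0" "ball (x', g x') e' \<subseteq> U" using U x' open_contains_ball by blast
  define d where "d = min e' (e / 2)"
  have d: "d > 0" using e e' by (simp add: d_def)
  define K where "K = - (U \<union> V)"
  have cK: "closed K" unfolding K_def using U V by auto
  have GK: "graph_of g \<inter> K = {}" using GUV unfolding K_def by auto
  have "\<not> {x' - d<..<x' + d} \<subseteq> fst ` K"
  proof
    assume "{x' - d<..<x' + d} \<subseteq> fst ` K"
    moreover have "x' - d < x' + d" using d by simp
    ultimately have "graph_of g \<inter> K \<noteq> {}" using H cK by blast
    then show False using GK by simp
  qed
  then obtain x'' where x'': "x'' \<in> {x' - d<..<x' + d}" "x'' \<notin> fst ` K" by blast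
  have line: "range (\<lambda>y::real. (x'', y)) \<subseteq> U \<union> V"
  proof
    fix z assume "z \<in> range (\<lambda>y::real. (x'', y))"
    then obtain y where "z = (x'', y)" by blast
    then show "z \<in> U \<union> V" using x''(2) unfolding K_def by (force simp: image_iff)
  qed
  have cl: "connected (range (\<lambda>y::real. (x'', y)))"
    by (intro connected_continuous_image continuous_intros connected_UNIV)
  have "(x'', g x') \<in> U"
  proof -
    have "dist (x'', g x') (x', g x') < e'"
      using x'' unfolding d_def by (auto simp: dist_Pair_Pair dist_real_def abs_less_iff min_def split: if_splits)
    then show ?thesis using e' by (auto simp: dist_commute)
  qed
  moreover have "(x'', g x) \<in> V"
  proof -
    have de: "d \<le> e / 2" by (simp add: d_def)
    have "dist x'' x' < e / 2" unfolding dist_real_def using x'' de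
      by (simp only: greaterThanLessThan_iff abs_less_iff) linarith
    then have "dist x'' x < e" using x'(2) dist_triangle[of x'' x x'] by linarith
    then have "dist (x'', g x) (x, g x) < e" by (simp add: dist_Pair_Pair)
    then show ?thesis using e by (auto simp: dist_commute)
  qed
  ultimately show False
    using connectedD[OF cl U V _ line] UV by blast
qed

lemma conn_crit:
  fixes g :: "real \<Rightarrow> real"
  assumes H: "\<And>K a b. closed K \<Longrightarrow> a < b \<Longrightarrow> {a<..<b} \<subseteq> fst ` K \<Longrightarrow> graph_of g \<inter> K \<noteq> {}"
  shows "connected (graph_of g)"
proof (rule ccontr)
  have H': "\<forall>K a b. closed K \<and> a < b \<and> {a<..<b} \<subseteq> fst ` K \<longrightarrow> graph_of g \<inter> K \<noteq> {}"
    using H by blast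
  let ?G = "graph_of g"
  assume "\<not> connected ?G"
  then obtain A B where AB: "open A" "open B" "?G \<subseteq> A \<union> B" "A \<inter> B \<inter> ?G = {}" "A \<inter> ?G \<noteq> {}" "B \<inter> ?G \<noteq> {}"
    unfolding connected_def by blast
  have s1: "(?G \<inter> A) \<inter> closure (?G \<inter> B) = {}"
    using open_Int_closure_eq_empty[OF AB(1), of "?G \<inter> B"] AB(4) by blast
  have s2: "(?G \<inter> B) \<inter> closure (?G \<inter> A) = {}"
    using open_Int_closure_eq_empty[OF AB(2), of "?G \<inter> A"] AB(4) by blast
  obtain U V where UV: "U \<inter> V = {}" "open U" "open V" "?G \<inter> A \<subseteq> U" "?G \<inter> B \<subseteq> V"
    using separation_closures[OF s1 s2] by blast
  have GUV: "?G \<subseteq> U \<union> V" using AB(3) UV by blast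
  define TU where "TU = {x. (x, g x) \<in> U}"
  define TV where "TV = {x. (x, g x) \<in> V}"
  have cov: "UNIV \<subseteq> TU \<union> TV" using GUV unfolding TU_def TV_def by (auto simp: graph_of_def)
  have dis: "TU \<inter> TV = {}" using UV(1) unfolding TU_def TV_def by auto
  have "closure TU \<subseteq> TU"
  proof
    fix y assume y: "y \<in> closure TU"
    show "y \<in> TU"
    proof (rule ccontr)
      assume "y \<notin> TU"
      then have "(y, g y) \<in> V" using cov unfolding TV_def by auto
      then have "y \<notin> closure TU"
        unfolding TU_def using sep_core[OF H' UV(2) UV(3) UV(1) GUV] by blast
      then show False using y by simp
    qed
  qed
  then have cTU: "closed TU" using closure_subset_eq by blast
  have "closure TV \<subseteq> TV"
  proof
    fix y assume y: "y \<in> closure TV"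
    show "y \<in> TV"
    proof (rule ccontr)
      assume "y \<notin> TV"
      then have "(y, g y) \<in> U" using cov unfolding TU_def by auto
      moreover have "V \<inter> U = {}" using UV(1) by blast
      moreover have "?G \<subseteq> V \<union> U" using GUV by blast
      ultimately have "y \<notin> closure TV"
        unfolding TV_def using sep_core[OF H' UV(3) UV(2)] by blast
      then show False using y by simp
    qed
  qed
  then have cTV: "closed TV" using closure_subset_eq by blast
  have "TU \<noteq> {}" using AB(5) UV(4) unfolding TU_def by (auto simp: graph_of_def)
  moreover have "TV \<noteq> {}" using AB(6) UV(5) unfolding TV_def by (auto simp: graph_of_def)
  ultimately have "\<not> connected (UNIV::real set)"
    unfolding connected_closed using cTU cTV cov dis by blast
  then show False by simp
qed



unbundle cardinal_syntax

lemma infinite_natsets: "infinite (UNIV :: nat set set)"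
proof -
  have "infinite (range (\<lambda>n::nat. {n}))" by (rule range_inj_infinite) (simp add: inj_on_def)
  then show ?thesis by (rule infinite_super[OF subset_UNIV])
qed

lemma nat_less_natsets: "|UNIV::nat set| <o |UNIV :: nat set set|"
  using card_of_Pow[of "UNIV::nat set"] unfolding Pow_UNIV .

lemma fin_less_inf: "finite A \<Longrightarrow> infinite B \<Longrightarrow> |A| <o |B|"
  using finite_ordLess_infinite[OF card_of_Well_order card_of_Well_order] by (simp add: Field_card_of)

lemma rat_le: "|UNIV::rat set| \<le>o |UNIV::nat set|"
  unfolding card_of_ordLeq[symmetric] by (intro exI[of _ to_nat]) simp

lemma span_small:
  fixes T :: "real set"
  assumes T: "|T| <o |UNIV :: nat set set|"
  shows "|Qv.span T| <o |UNIV :: nat set set|"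
proof -
  define B where "B = T <+> (UNIV::nat set)"
  have natB: "|UNIV::nat set| \<le>o |B|" unfolding B_def by (rule card_of_Plus2)
  have infB: "infinite B" using natB infinite_iff_card_of_nat by blast
  have TB: "|T| \<le>o |B|" unfolding B_def by (rule card_of_Plus1)
  have BC: "|B| <o |UNIV :: nat set set|"
    unfolding B_def by (rule card_of_Plus_ordLess_infinite[OF infinite_natsets T nat_less_natsets])
  have ratB: "|UNIV::rat set| \<le>o |B|" using rat_le natB ordLeq_transitive by blast
  have QT: "|(UNIV::rat set) \<times> T| \<le>o |B|"
    using card_of_Times_ordLeq_infinite_Field[of "|B|" "UNIV::rat set" T] infB ratB TB
    by (simp add: Field_card_of card_of_Card_order card_of_card_order_on)
  define L where "L = rec_nat {0::real} (\<lambda>k S. (\<lambda>(z, q, t). z + scaleQ q t) ` (S \<times> ((UNIV::rat set) \<times> T)))"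
  have L0: "L 0 = {0}" by (simp add: L_def)
  have LS: "L (Suc k) = (\<lambda>(z, q, t). z + scaleQ q t) ` (L k \<times> ((UNIV::rat set) \<times> T))" for k
    by (simp add: L_def)
  have Lk: "|L k| \<le>o |B|" for k
  proof (induction k)
    case 0
    show ?case unfolding L0 using fin_less_inf[of "{0::real}" B] infB by (simp add: ordLess_imp_ordLeq)
  next
    case (Suc k)
    have "|L k \<times> ((UNIV::rat set) \<times> T)| \<le>o |B|"
      using card_of_Times_ordLeq_infinite_Field[of "|B|" "L k" "(UNIV::rat set) \<times> T"] infB Suc QT
      by (simp add: Field_card_of card_of_Card_order card_of_card_order_on)
    then show ?case unfolding LS using card_of_image ordLeq_transitive by blast
  qed
  have sp: "Qv.span T \<subseteq> (\<Union>k. L k)"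
  proof
    fix v assume "v \<in> Qv.span T"
    then obtain t r where tr: "finite t" "t \<subseteq> T" "v = (\<Sum>a\<in>t. scaleQ (r a) a)"
      unfolding Qv.span_explicit by blast
    have "t \<subseteq> T \<Longrightarrow> (\<Sum>a\<in>t. scaleQ (r a) a) \<in> L (card t)"
      using tr(1)
    proof (induction t rule: finite_induct)
      case empty then show ?case by (simp add: L0)
    next
      case (insert x F)
      have eq: "(\<Sum>a\<in>insert x F. scaleQ (r a) a) = (\<lambda>(z, q, t). z + scaleQ q t) ((\<Sum>a\<in>F. scaleQ (r a) a), r x, x)"
        using insert by simp
      have mem: "((\<Sum>a\<in>F. scaleQ (r a) a), r x, x) \<in> L (card F) \<times> ((UNIV::rat set) \<times> T)"
        using insert by auto
      have "(\<Sum>a\<in>insert x F. scaleQ (r a) a) \<in> L (Suc (card F))"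
        unfolding LS by (rule image_eqI[where f="\<lambda>(z, q, t). z + scaleQ q t", OF eq mem])
      then show ?case using insert by simp
    qed
    then show "v \<in> (\<Union>k. L k)" using tr by blast
  qed
  have "|\<Union>k. L k| \<le>o |B|"
    by (rule card_of_UNION_ordLeq_infinite[OF infB natB]) (use Lk in blast)
  then have "|Qv.span T| \<le>o |B|" using card_of_mono1[OF sp] ordLeq_transitive by blast
  then show ?thesis using BC ordLeq_ordLess_trans by blast
qed

lemma interval_big:
  fixes a b :: real
  assumes "a < b"
  shows "|UNIV :: nat set set| \<le>o |{a<..<b}|"
proof -
  have "(UNIV :: nat set set) \<approx> {a<..<b}"
    using nat_sets_eqpoll_reals open_interval_eqpoll_reals[of a b] assms
    by (meson eqpoll_sym eqpoll_trans)
  then show ?thesis unfolding eqpoll_iff_card_of_ordIso using ordIso_iff_ordLeq by blast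
qed

lemma avoid_span:
  fixes a b :: real
  assumes "a < b" "|T| <o |UNIV :: nat set set|"
  shows "\<exists>x. a < x \<and> x < b \<and> x \<notin> Qv.span T"
proof (rule ccontr)
  assume "\<not> ?thesis"
  then have "{a<..<b} \<subseteq> Qv.span T" by auto
  then have "|{a<..<b}| \<le>o |Qv.span T|" by (rule card_of_mono1)
  then have "|UNIV :: nat set set| \<le>o |Qv.span T|" using interval_big[OF assms(1)] ordLeq_transitive by blast
  then show False using span_small[OF assms(2)] not_ordLess_ordLeq by blast
qed

lemma closed_enum: "\<exists>FF :: nat set \<Rightarrow> (real \<times> real) set. \<forall>K. closed K \<longrightarrow> (\<exists>S. FF S = K)"
proof -
  obtain \<B> :: "(real \<times> real) set set" where B: "countable \<B>" "\<And>C. C \<in> \<B> \<Longrightarrow> open C"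
       "\<And>S. open S \<Longrightarrow> \<exists>U. U \<subseteq> \<B> \<and> S = \<Union>U"
    using univ_second_countable by blast
  define FF where "FF S = - \<Union> (from_nat_into \<B> ` S)" for S
  have "\<exists>S. FF S = K" if "closed K" for K
  proof -
    have "open (- K)" using that by (simp add: open_Compl)
    then obtain U where U: "U \<subseteq> \<B>" "- K = \<Union>U" using B(3) by blast
    define S where "S = {k. from_nat_into \<B> k \<in> U}"
    have "from_nat_into \<B> ` S = U"
    proof
      show "from_nat_into \<B> ` S \<subseteq> U" unfolding S_def by auto
      show "U \<subseteq> from_nat_into \<B> ` S"
      proof
        fix u assume "u \<in> U"
        then obtain k where "from_nat_into \<B> k = u" using from_nat_into_surj[OF B(1)] U(1) by blast
        then show "u \<in> from_nat_into \<B> ` S" unfolding S_def using \<open>u \<in> U\<close> by blast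
      qed
    qed
    then have "FF S = K" unfolding FF_def using U(2) by (metis double_compl)
    then show ?thesis by blast
  qed
  then show ?thesis by blast
qed



unbundle cardinal_syntax

definition good :: "(real \<times> real) set \<Rightarrow> bool" where
  "good K \<longleftrightarrow> (\<exists>a b. a < b \<and> {a<..<b} \<subseteq> fst ` K)"

definition FFc :: "nat set \<Rightarrow> (real \<times> real) set" where
  "FFc = (SOME FF. \<forall>K. closed K \<longrightarrow> (\<exists>S. FF S = K))"

lemma FFc_surj: "closed K \<Longrightarrow> \<exists>S. FFc S = K"
  using someI_ex[OF closed_enum] unfolding FFc_def by blast

abbreviation rr :: "(nat set \<times> nat set) set" where "rr \<equiv> |UNIV :: nat set set|"

definition stepH :: "(nat set \<Rightarrow> real \<times> real) \<Rightarrow> nat set \<Rightarrow> real \<times> real" where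
  "stepH rec S = (SOME p. fst p \<notin> Qv.span (fst ` rec ` underS rr S) \<and> (good (FFc S) \<longrightarrow> p \<in> FFc S))"

definition xx :: "nat set \<Rightarrow> real \<times> real" where "xx = wfrec (rr - Id) stepH"

lemma wo_rr: "wo_rel rr" by (simp add: wo_rel_def card_of_Well_order)

lemma wf_rr: "wf (rr - Id)" using wo_rel.WF[OF wo_rr] .

lemma rr_total: "(S, T) \<in> rr \<or> (T, S) \<in> rr"
  using wo_rel.TOTALS[OF wo_rr] by (simp add: Field_card_of)

lemma rr_trans: "(S, T) \<in> rr \<Longrightarrow> (T, U) \<in> rr \<Longrightarrow> (S, U) \<in> rr"
  using wo_rel.TRANS[OF wo_rr] unfolding trans_def by blast

lemma rr_refl: "(S, S) \<in> rr"
  using wo_rel.REFL[OF wo_rr] by (simp add: Field_card_of refl_on_def)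

lemma xx_eq: "xx S = stepH xx S"
proof -
  have "xx S = stepH (cut xx (rr - Id) S) S" unfolding xx_def by (rule wfrec[OF wf_rr])
  moreover have "(cut xx (rr - Id) S) ` underS rr S = xx ` underS rr S"
    by (intro image_cong refl) (simp add: underS_def cut_apply)
  ultimately show ?thesis unfolding stepH_def by simp
qed

lemma under_small: "|underS rr S| <o rr"
  by (rule card_of_underS[OF card_of_Card_order]) (simp add: Field_card_of)

lemma xx_prop: "fst (xx S) \<notin> Qv.span (fst ` xx ` underS rr S) \<and> (good (FFc S) \<longrightarrow> xx S \<in> FFc S)"
proof -
  let ?T = "fst ` xx ` underS rr S"
  have "|?T| \<le>o |xx ` underS rr S|" by (rule card_of_image)
  moreover have "|xx ` underS rr S| \<le>o |underS rr S|" by (rule card_of_image)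
  ultimately have T: "|?T| <o rr" using under_small ordLeq_transitive ordLeq_ordLess_trans by blast
  have ex: "\<exists>p. fst p \<notin> Qv.span ?T \<and> (good (FFc S) \<longrightarrow> p \<in> FFc S)"
  proof (cases "good (FFc S)")
    case True
    then obtain a b where ab: "a < b" "{a<..<b} \<subseteq> fst ` FFc S" unfolding good_def by blast
    obtain x where x: "a < x" "x < b" "x \<notin> Qv.span ?T" using avoid_span[OF ab(1) T] by blast
    then have "x \<in> fst ` FFc S" using ab by auto
    then obtain p where "p \<in> FFc S" "fst p = x" by blast
    then show ?thesis using x by blast
  next
    case False
    obtain x where x: "0 < x" "x < 1" "x \<notin> Qv.span ?T" using avoid_span[OF _ T, of 0 1] by auto
    show ?thesis by (rule exI[of _ "(x, 0)"]) (use x False in auto)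
  qed
  show ?thesis
    using someI_ex[OF ex] xx_eq[of S] unfolding stepH_def by simp
qed

definition fx :: "nat set \<Rightarrow> real" where "fx S = fst (xx S)"

lemma fx_inj: "inj fx"
proof (rule injI)
  have *: False if "(T, S) \<in> rr" "T \<noteq> S" "fx S = fx T" for S T
  proof -
    have "T \<in> underS rr S" using that by (simp add: underS_def)
    then have "fx T \<in> Qv.span (fst ` xx ` underS rr S)" unfolding fx_def by (intro Qv.span_base) blast
    then show False using xx_prop[of S] that(3) unfolding fx_def by simp
  qed
  fix S T assume "fx S = fx T"
  then show "S = T" using *[of T S] *[of S T] rr_total[of S T] by metis
qed

lemma fx_nonzero: "fx S \<noteq> 0"
  using xx_prop[of S] Qv.span_zero unfolding fx_def by metis

lemma fin_max: "finite A \<Longrightarrow> A \<noteq> {} \<Longrightarrow> \<exists>M\<in>A. \<forall>T\<in>A. (T, M) \<in> rr"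
proof (induction A rule: finite_ne_induct)
  case (singleton x) then show ?case using rr_refl by auto
next
  case (insert x F)
  then obtain M where M: "M \<in> F" "\<forall>T\<in>F. (T, M) \<in> rr" by blast
  show ?case
  proof (cases "(x, M) \<in> rr")
    case True then show ?thesis using M by auto
  next
    case False
    then have "(M, x) \<in> rr" using rr_total by blast
    then show ?thesis using M rr_trans rr_refl by blast
  qed
qed

lemma indep_fin: "finite A \<Longrightarrow> Qv.independent (fx ` A)"
proof (induction A rule: finite_psubset_induct)
  case (psubset A)
  show ?case
  proof (cases "A = {}")
    case True then show ?thesis using Qv.independent_empty by simp
  next
    case False
    obtain M where M: "M \<in> A" "\<forall>T\<in>A. (T, M) \<in> rr" using fin_max[OF psubset.hyps False] by blast
    have ind: "Qv.independent (fx ` (A - {M}))" using psubset.IH[of "A - {M}"] M(1) by blast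
    have "fx ` (A - {M}) \<subseteq> fst ` xx ` underS rr M"
      using M unfolding fx_def by (auto simp: underS_def)
    then have "fx M \<notin> Qv.span (fx ` (A - {M}))"
      using xx_prop[of M] Qv.span_mono unfolding fx_def by blast
    then have "Qv.independent (insert (fx M) (fx ` (A - {M})))"
      by (rule Qv.independent_insertI[OF _ ind])
    moreover have "insert (fx M) (fx ` (A - {M})) = fx ` A" using M(1) by blast
    ultimately show ?thesis by simp
  qed
qed

lemma indep_all: "Qv.independent (range fx)"
proof
  assume "Qv.dependent (range fx)"
  then obtain t u where tu: "finite t" "t \<subseteq> range fx" "(\<Sum>v\<in>t. scaleQ (u v) v) = 0" "\<exists>v\<in>t. u v \<noteq> 0"
    unfolding Qv.dependent_explicit by blast
  obtain A where A: "A \<subseteq> UNIV" "finite A" "t = fx ` A" using finite_subset_image[OF tu(1,2)] by blast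
  have "Qv.dependent (fx ` A)" unfolding Qv.dependent_explicit using tu A(3) by blast
  then show False using indep_fin[OF A(2)] by simp
qed

definition aJ :: "nat \<Rightarrow> real \<Rightarrow> real" where
  "aJ n = QQ.construct (range fx) (\<lambda>v. snd (xx (inv fx v)) / v ^ (n - 1))"

lemma aJ_add: "aJ n (x + y) = aJ n x + aJ n y"
proof -
  have "Vector_Spaces.linear scaleQ scaleQ (aJ n)" unfolding aJ_def by (rule QQ.linear_construct[OF indep_all])
  then have "module_hom scaleQ scaleQ (aJ n)" by (simp add: module_hom_iff_linear)
  then show ?thesis by (rule module_hom.add)
qed

lemma aJ_fx: "aJ n (fx S) = snd (xx S) / fx S ^ (n - 1)"
  unfolding aJ_def using QQ.construct_basis[OF indep_all, of "fx S"] fx_inj by simp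

definition gJ :: "nat \<Rightarrow> real \<Rightarrow> real" where
  "gJ n x = x ^ (n - 1) * aJ n x"

lemma gJ_fx: "gJ n (fx S) = snd (xx S)"
  unfolding gJ_def aJ_fx using fx_nonzero[of S] by simp

lemma gJ_mon:
  assumes "n \<ge> 1"
  shows "monomial_fun n (gJ n)"
proof -
  define u where "u i x = (if i < n - 1 then x else aJ n x)" for i x
  have "monomial_fun n (\<lambda>x. \<Prod>i<n. u i x)"
    by (rule prod_additive_monomial) (simp add: u_def aJ_add)
  moreover have "(\<lambda>x. \<Prod>i<n. u i x) = gJ n"
  proof
    fix x
    obtain m where m: "n = Suc m" using assms by (cases n) auto
    have "(\<Prod>i<n. u i x) = (\<Prod>i<m. u i x) * u m x" by (simp add: m)
    also have "(\<Prod>i<m. u i x) = (\<Prod>i<m. x)" by (intro prod.cong refl) (simp add: u_def m)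
    finally show "(\<Prod>i<n. u i x) = gJ n x" by (simp add: gJ_def u_def m)
  qed
  ultimately show ?thesis by simp
qed

lemma gJ_meets:
  assumes "closed K" "a < b" "{a<..<b} \<subseteq> fst ` K"
  shows "graph_of (gJ n) \<inter> K \<noteq> {}"
proof -
  obtain S where S: "FFc S = K" using FFc_surj[OF assms(1)] by blast
  have "good (FFc S)" unfolding good_def S using assms by blast
  then have "xx S \<in> K" using xx_prop[of S] S by simp
  moreover have "xx S = (fx S, gJ n (fx S))" unfolding gJ_fx by (simp add: fx_def)
  ultimately show ?thesis by (auto simp: graph_of_def)
qed

lemma example_conn:
  assumes n: "n \<ge> 1"
  shows "\<exists>f::real \<Rightarrow> real. monomial_fun n f \<and> \<not> continuous_on UNIV f \<and> connected (graph_of f)"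
proof (intro exI conjI)
  show "monomial_fun n (gJ n)" by (rule gJ_mon[OF n])
  show "connected (graph_of (gJ n))" by (rule conn_crit) (rule gJ_meets)
  show "\<not> continuous_on UNIV (gJ n)"
  proof
    assume c: "continuous_on UNIV (gJ n)"
    define K where "K = (\<lambda>x. (x, gJ n x + 1)) ` {0..1::real}"
    have "compact K" unfolding K_def
      by (intro compact_continuous_image continuous_intros continuous_on_subset[OF c]) auto
    then have cK: "closed K" by (rule compact_imp_closed)
    have "{0<..<1} \<subseteq> fst ` K" unfolding K_def by (force simp: image_image)
    then have "graph_of (gJ n) \<inter> K \<noteq> {}" by (intro gJ_meets[OF cK, of 0 1]) auto
    moreover have "graph_of (gJ n) \<inter> K = {}" unfolding K_def graph_of_def by auto
    ultimately show False by simp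
  qed
qed


theorem theorem1:
  shows "(\<forall>(n::nat) (f::real \<Rightarrow> real). n \<ge> 1 \<longrightarrow> monomial_fun n f \<longrightarrow>
            connected (graph_of f) \<or> totally_disconnected (graph_of f))
       \<and> (\<forall>n::nat. n \<ge> 1 \<longrightarrow>
            (\<exists>f::real \<Rightarrow> real. monomial_fun n f \<and> \<not> continuous_on UNIV f
                \<and> connected (graph_of f))
          \<and> (\<exists>g::real \<Rightarrow> real. monomial_fun n g \<and> \<not> continuous_on UNIV g
                \<and> totally_disconnected (graph_of g)))"
  using dichotomy example_conn example_td by blast

end
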